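(* Fix $\delta\in(0,1)$. For $x$ large enough and any $\epsilon>0$, $$\sum_{\substack{x^{\delta}<d\le x\\ d\in \mathcal S(x,(\log x)^2)}}\frac{3^{\omega(d)}}{d}\ \ll\ x^{-\frac{\delta}{2}+\epsilon}.$$ Moreover, there is a positive constant $c$ such that for every positive integer $t$ with $x^{1/t}\ge(\log x)^2$, $$\sum_{\substack{x^{\delta}<d\le x\\ d\in \mathcal S(x,x^{1/t})}}\frac{3^{\omega(d)}}{d}\ \ll\ (\log x)^3\exp(-c\,t\log t).$$
   Context: For $x,y\ge1$, $\mathcal S(x,y)$ denotes the set of natural numbers less than $x$ all of whose prime factors are less than $y$ ($y$-smooth numbers). $\omega(d)$ denotes the number of distinct prime divisors of $d$. *)

theory Defs
  imports "HOL-Analysis.Analysis" "HOL-Computational_Algebra.Primes"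
begin

definition smooth_set :: "real \<Rightarrow> real \<Rightarrow> nat set" where
  "smooth_set x y = {n::nat. 1 \<le> n \<and> real n < x \<and> (\<forall>p\<in>prime_factors n. real p < y)}"

definition omega :: "nat \<Rightarrow> nat" where
  "omega d = card (prime_factors d)"

definition smooth_sum :: "real \<Rightarrow> real \<Rightarrow> real \<Rightarrow> real" where
  "smooth_sum \<delta> x y =
     (\<Sum>d\<in>{d. x powr \<delta> < real d \<and> real d \<le> x \<and> d \<in> smooth_set x y}.
        3 ^ omega d / real d)"

end

theory Submission
  imports Defs "HOL-Real_Asymp.Real_Asymp"
begin

lemma harm_bound:
  fixes x :: real assumes "x \<ge> 1"
  shows "(\<Sum>b\<in>{b::nat. 1 \<le> b \<and> real b < x}. 1 / real b) \<le> 1 + ln x"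
proof -
  define n where "n = nat \<lfloor>x\<rfloor>"
  have n1: "n \<ge> 1" using assms by (simp add: n_def le_nat_iff)
  have nx: "real n \<le> x" using assms by (simp add: n_def)
  have sub: "{b::nat. 1 \<le> b \<and> real b < x} \<subseteq> {1..n}"
  proof
    fix b assume "b \<in> {b::nat. 1 \<le> b \<and> real b < x}"
    then have "1 \<le> b" "real b < x" by auto
    then have "int b \<le> \<lfloor>x\<rfloor>" by linarith
    then show "b \<in> {1..n}" using \<open>1 \<le> b\<close> by (simp add: n_def)
  qed
  have "(\<Sum>b\<in>{b::nat. 1 \<le> b \<and> real b < x}. 1 / real b) \<le> (\<Sum>b\<in>{1..n}. 1 / real b)"
    by (rule sum_mono2[OF _ sub]) auto
  also have "\<dots> = harm n" by (simp add: harm_def divide_inverse)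
  also have "\<dots> \<le> 1 + ln (real n)"
    using euler_mascheroni_sequence_decreasing[of 1 n] n1 by (simp add: harm_def)
  also have "ln (real n) \<le> ln x" using n1 nx by simp
  finally show ?thesis by simp
qed

lemma sum_ln_pf_le:
  fixes m :: nat assumes "m \<ge> 1"
  shows "(\<Sum>p\<in>prime_factors m. ln (real p)) \<le> ln (real m)"
proof -
  have "(\<Prod>p\<in>prime_factors m. p) \<le> (\<Prod>p\<in>prime_factors m. p ^ multiplicity p m)"
  proof (rule prod_mono)
    fix p assume p: "p \<in> prime_factors m"
    then have "multiplicity p m \<ge> 1" using assms
      by (simp add: prime_factors_multiplicity)
    moreover have "p \<ge> 1" using prime_gt_0_nat[OF in_prime_factors_imp_prime[OF p]] by linarith
    ultimately show "0 \<le> p \<and> p \<le> p ^ multiplicity p m"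
      by (simp add: self_le_power)
  qed
  also have "\<dots> = m" using assms by (subst prod_prime_factors) auto
  finally have le: "(\<Prod>p\<in>prime_factors m. p) \<le> m" .
  have pos: "\<And>p. p \<in> prime_factors m \<Longrightarrow> real p > 0"
    by (auto dest: in_prime_factors_imp_prime simp: prime_gt_0_nat)
  have "(\<Sum>p\<in>prime_factors m. ln (real p)) = ln (\<Prod>p\<in>prime_factors m. real p)"
    using pos by (simp add: ln_prod)
  also have "\<dots> \<le> ln (real m)"
    using le pos assms by (subst ln_le_cancel_iff) (auto simp: prod_pos simp flip: of_nat_prod)
  finally show ?thesis .
qed

lemma card_multiples_ge:
  fixes n p :: nat assumes "p \<ge> 1"
  shows "n div p \<le> card {m\<in>{1..n}. p dvd m}"
proof -
  have "(\<lambda>j. j * p) ` {1..n div p} \<subseteq> {m\<in>{1..n}. p dvd m}"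
    using assms by (auto simp: less_eq_div_iff_mult_less_eq)
  moreover have "inj_on (\<lambda>j. j * p) {1..n div p}" using assms by (auto simp: inj_on_def)
  ultimately show ?thesis
  proof -
    have "n div p = card ((\<lambda>j. j * p) ` {1..n div p})"
      using \<open>inj_on _ _\<close> by (simp add: card_image)
    also have "\<dots> \<le> card {m\<in>{1..n}. p dvd m}"
      using \<open>_ \<subseteq> _\<close> by (intro card_mono) auto
    finally show ?thesis .
  qed
qed

lemma mertens_lite:
  fixes n :: nat assumes "n \<ge> 1"
  shows "(\<Sum>p\<in>{p. prime p \<and> p \<le> n}. ln (real p) / real p) \<le> 2 * ln (real n)"
proof -
  define P where "P = {p. prime p \<and> p \<le> n}"
  have finP: "finite P" unfolding P_def by auto
  have pfm: "prime_factors m = {p\<in>P. p dvd m}" if "m \<in> {1..n}" for m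
    using that by (auto simp: P_def prime_factors_dvd dest: dvd_imp_le)
  have "(\<Sum>m\<in>{1..n}. \<Sum>p\<in>prime_factors m. ln (real p)) \<le> (\<Sum>m\<in>{1..n}. ln (real m))"
    by (intro sum_mono sum_ln_pf_le) auto
  also have "\<dots> \<le> (\<Sum>m\<in>{1..n}. ln (real n))"
    by (intro sum_mono) auto
  also have "\<dots> = real n * ln (real n)" by simp
  finally have A: "(\<Sum>m\<in>{1..n}. \<Sum>p\<in>prime_factors m. ln (real p)) \<le> real n * ln (real n)" .
  have "(\<Sum>m\<in>{1..n}. \<Sum>p\<in>prime_factors m. ln (real p))
        = (\<Sum>m\<in>{1..n}. \<Sum>p\<in>P. if p dvd m then ln (real p) else 0)"
  proof (rule sum.cong[OF refl])
    fix m assume "m \<in> {1..n}"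
    then show "(\<Sum>p\<in>prime_factors m. ln (real p)) = (\<Sum>p\<in>P. if p dvd m then ln (real p) else 0)"
      using finP by (simp only: pfm sum.inter_filter)
  qed
  also have "\<dots> = (\<Sum>p\<in>P. \<Sum>m\<in>{1..n}. if p dvd m then ln (real p) else 0)"
    by (rule sum.swap)
  also have "\<dots> = (\<Sum>p\<in>P. ln (real p) * real (card {m\<in>{1..n}. p dvd m}))"
    by (intro sum.cong refl) (simp add: sum.inter_filter[symmetric])
  finally have B: "(\<Sum>p\<in>P. ln (real p) * real (card {m\<in>{1..n}. p dvd m})) \<le> real n * ln (real n)"
    using A by simp
  have C: "real n * (ln (real p) / real p) / 2 \<le> ln (real p) * real (card {m\<in>{1..n}. p dvd m})"
    if "p \<in> P" for p
  proof -
    have p: "prime p" "p \<le> n" using that by (auto simp: P_def)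
    have p1: "p \<ge> 1" using p prime_ge_1_nat by blast
    have lnp: "ln (real p) \<ge> 0" using p1 by simp
    have d1: "n div p \<ge> 1" using p p1 by (simp add: less_eq_div_iff_mult_less_eq)
    define q where "q = n div p"
    have "n = q * p + n mod p" by (simp add: q_def)
    moreover have "n mod p < p" using p1 by simp
    ultimately have "n < (q + 1) * p" by (simp add: algebra_simps)
    moreover have "(q + 1) * p \<le> 2 * q * p" using d1 by (simp add: q_def)
    ultimately have "n \<le> 2 * q * p" by linarith
    hence "real n \<le> 2 * real (n div p) * real p" unfolding q_def
      by (metis of_nat_le_iff of_nat_mult of_nat_numeral)
    hence "real n / real p / 2 \<le> real (n div p)" using p1 by (simp add: field_simps)
    also have "\<dots> \<le> real (card {m\<in>{1..n}. p dvd m})" using card_multiples_ge[OF p1, of n] by simp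
    finally have "real n / real p / 2 \<le> real (card {m\<in>{1..n}. p dvd m})" .
    from mult_left_mono[OF this lnp] show ?thesis by (simp add: field_simps)
  qed
  have "real n * (\<Sum>p\<in>P. ln (real p) / real p) / 2 = (\<Sum>p\<in>P. real n * (ln (real p) / real p) / 2)"
    by (simp add: sum_distrib_left sum_divide_distrib)
  also have "\<dots> \<le> real n * ln (real n)" using B C by (meson order_trans sum_mono)
  finally show ?thesis using assms unfolding P_def[symmetric] by (simp add: field_simps)
qed

definition hp :: "real \<Rightarrow> nat \<Rightarrow> real" where
  "hp s k = (if k = 0 then 1 else (s - 1) * s ^ (k - 1))"

lemma hp_telescope: "(\<Sum>k\<in>{0..m}. hp s k) = s ^ m"
proof (induction m)
  case 0 then show ?case by (simp add: hp_def)
next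
  case (Suc m)
  have "(\<Sum>k\<in>{0..Suc m}. hp s k) = (\<Sum>k\<in>{0..m}. hp s k) + hp s (Suc m)" by simp
  also have "\<dots> = s ^ Suc m" using Suc by (simp add: hp_def algebra_simps)
  finally show ?case .
qed

lemma hp_nonneg: "s \<ge> 1 \<Longrightarrow> hp s k \<ge> 0"
  by (simp add: hp_def)

lemma mult_le_self_nat:
  fixes p e :: nat assumes "prime p" "e > 0"
  shows "multiplicity p e \<le> e"
proof -
  have "p ^ multiplicity p e dvd e" by (rule multiplicity_dvd)
  hence "p ^ multiplicity p e \<le> e" using assms by (simp add: dvd_imp_le)
  moreover have "multiplicity p e < 2 ^ multiplicity p e" by (rule less_exp)
  moreover have "(2::nat) ^ multiplicity p e \<le> p ^ multiplicity p e"
    using prime_ge_2_nat[OF assms(1)] by (simp add: power_mono)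
  ultimately show ?thesis by linarith
qed

lemma smooth_prod_rep:
  fixes e :: nat and Y :: "nat set"
  assumes "e \<ge> 1" "prime_factors e \<subseteq> Y" "finite Y" "\<forall>p\<in>Y. prime p"
  shows "(\<Prod>p\<in>Y. p ^ multiplicity p e) = e"
proof -
  have "(\<Prod>p\<in>Y. p ^ multiplicity p e) = (\<Prod>p\<in>prime_factors e. p ^ multiplicity p e)"
  proof (rule prod.mono_neutral_right)
    show "\<forall>i\<in>Y - prime_factors e. i ^ multiplicity i e = 1"
      using assms by (auto simp: prime_factors_multiplicity)
  qed (use assms in auto)
  also have "\<dots> = e" using assms by (subst prod_prime_factors) auto
  finally show ?thesis .
qed

lemma nat_le_ceil: fixes y :: real assumes "real p < y" shows "p \<le> nat \<lceil>y\<rceil>"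
proof -
  have "real p \<le> of_int \<lceil>y\<rceil>" using le_of_int_ceiling[of y] assms by linarith
  hence "int p \<le> \<lceil>y\<rceil>" by (metis of_int_le_iff of_int_of_nat_eq)
  thus ?thesis by (simp add: le_nat_iff)
qed

lemma finite_primes_below: "finite {p::nat. prime p \<and> real p < y}"
  by (rule finite_subset[of _ "{..nat \<lceil>y\<rceil>}"]) (auto intro: nat_le_ceil)

lemma finite_smooth_set: "finite (smooth_set x y)"
  unfolding smooth_set_def
  by (rule finite_subset[of _ "{..nat \<lceil>x\<rceil>}"]) (auto intro: nat_le_ceil)

lemma factor_bound:
  fixes p :: nat and \<alpha> :: real and K :: nat
  assumes "prime p" "0 \<le> \<alpha>" "\<alpha> \<le> 1/2"
  shows "(\<Sum>k\<in>{0..K}. hp (real p powr \<alpha>) k / real p ^ k) \<le> 1 + 4 * ((real p powr \<alpha> - 1) / real p)"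
proof -
  define s where "s = real p powr \<alpha>"
  define r where "r = s / real p"
  have p2: "real p \<ge> 2" using prime_ge_2_nat[OF assms(1)] by linarith
  have s1: "s \<ge> 1" unfolding s_def using p2 assms(2) by (simp add: ge_one_powr_ge_zero)
  have "s \<le> real p powr (1/2)" unfolding s_def using p2 assms by (intro powr_mono) auto
  also have "\<dots> = sqrt (real p)" by (simp add: powr_half_sqrt)
  finally have ss: "s \<le> sqrt (real p)" .
  have sq1: "sqrt (real p) \<ge> 4/3"
  proof -
    have "sqrt (16/9) \<le> sqrt (real p)" using p2 by (subst real_sqrt_le_iff) linarith
    moreover have "sqrt (16/9) = (4/3::real)" by (simp add: real_sqrt_divide)
    ultimately show ?thesis by simp
  qed
  have e1: "sqrt (real p) * sqrt (real p) = real p" using p2 by simp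
  have "4/3 * sqrt (real p) \<le> sqrt (real p) * sqrt (real p)"
    by (rule mult_right_mono[OF sq1]) simp
  hence "s \<le> 3/4 * real p" using e1 ss by linarith
  hence r34: "r \<le> 3/4" unfolding r_def using p2 by (simp add: divide_le_eq)
  have r0: "r \<ge> 0" unfolding r_def using s1 p2 by simp
  have geo: "(\<Sum>j<K. r ^ j) \<le> 4"
  proof -
    have "(\<Sum>j<K. r ^ j) = (1 - r ^ K) / (1 - r)" using r34 by (simp add: sum_gp_strict)
    also have "\<dots> \<le> 1 / (1 - r)" using r34 r0 by (intro divide_right_mono) auto
    also have "\<dots> \<le> 4" using r34 by (simp add: field_simps)
    finally show ?thesis .
  qed
  have "(\<Sum>k\<in>{0..K}. hp s k / real p ^ k) = 1 + (\<Sum>k\<in>{Suc 0..K}. hp s k / real p ^ k)"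
    by (simp add: sum.atLeast_Suc_atMost hp_def)
  also have "(\<Sum>k\<in>{Suc 0..K}. hp s k / real p ^ k) = (\<Sum>j<K. hp s (Suc j) / real p ^ Suc j)"
    by (rule sum.atLeast1_atMost_eq)
  also have "\<dots> = (\<Sum>j<K. (s - 1) / real p * r ^ j)"
    using p2 by (intro sum.cong refl) (simp add: hp_def r_def power_divide)
  also have "\<dots> = (s - 1) / real p * (\<Sum>j<K. r ^ j)" by (simp add: sum_distrib_left)
  also have "\<dots> \<le> (s - 1) / real p * 4" using geo s1 p2 by (intro mult_left_mono) auto
  also have "\<dots> = 4 * ((s - 1) / real p)" by simp
  finally show ?thesis unfolding s_def by simp
qed

lemma prime_powr_ge1: "prime (p::nat) \<Longrightarrow> 0 \<le> a \<Longrightarrow> 1 \<le> real p powr a"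
  by (rule ge_one_powr_ge_zero) (auto simp: Suc_le_eq prime_gt_0_nat)

lemma S_bound:
  fixes x y \<alpha> :: real
  assumes x1: "x \<ge> 1" and a0: "0 \<le> \<alpha>" and a1: "\<alpha> \<le> 1/2"
  shows "(\<Sum>e\<in>smooth_set x y. real e powr (\<alpha> - 1))
           \<le> (1 + ln x) * exp (4 * (\<Sum>p\<in>{p. prime p \<and> real p < y}. (real p powr \<alpha> - 1) / real p))"
proof -
  define Y where "Y = {p::nat. prime p \<and> real p < y}"
  define E where "E = smooth_set x y"
  define K where "K = nat \<lceil>x\<rceil>"
  define B where "B = {b::nat. 1 \<le> b \<and> real b < x}"
  define U where "U = (\<lambda>e::nat. PiE Y (\<lambda>p. {0..multiplicity p e}))"
  define V where "V = PiE Y (\<lambda>_::nat. {0..K})"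
  define au where "au = (\<lambda>u::nat\<Rightarrow>nat. \<Prod>p\<in>Y. p ^ u p)"
  define H where "H = (\<lambda>u::nat\<Rightarrow>nat. \<Prod>p\<in>Y. hp (real p powr \<alpha>) (u p))"
  have finY: "finite Y" unfolding Y_def by (rule finite_primes_below)
  have primeY: "\<forall>p\<in>Y. prime p" unfolding Y_def by auto
  have finE: "finite E" unfolding E_def by (rule finite_smooth_set)
  have finB: "finite B" unfolding B_def
    by (rule finite_subset[of _ "{..nat \<lceil>x\<rceil>}"]) (auto intro: nat_le_ceil)
  have finV: "finite V" unfolding V_def using finY by (intro finite_PiE) auto
  have finU: "finite (U e)" for e unfolding U_def using finY by (intro finite_PiE) auto
  have Eprops: "e \<ge> 1" "real e < x" "prime_factors e \<subseteq> Y" if "e \<in> E" for e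
    using that unfolding E_def smooth_set_def Y_def by (auto dest: in_prime_factors_imp_prime)
  have au_pos: "au u > 0" for u unfolding au_def using primeY
    by (intro prod_pos) (auto simp: prime_gt_0_nat)
  have mult_au: "multiplicity q (au u) = (if q \<in> Y then u q else 0)" if "prime q" for q u
    unfolding au_def using finY primeY that by (intro multiplicity_prod_prime_powers) auto

  have step1: "real e powr \<alpha> = (\<Sum>u\<in>U e. H u)" if "e \<in> E" for e
  proof -
    have "(\<Sum>u\<in>U e. H u) = (\<Prod>p\<in>Y. \<Sum>k\<in>{0..multiplicity p e}. hp (real p powr \<alpha>) k)"
      unfolding U_def H_def using finY by (subst prod_sum_PiE) auto
    also have "\<dots> = (\<Prod>p\<in>Y. (real p powr \<alpha>) ^ multiplicity p e)"
      by (simp add: hp_telescope)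
    also have "\<dots> = (\<Prod>p\<in>Y. (real p ^ multiplicity p e) powr \<alpha>)"
    proof (rule prod.cong[OF refl])
      fix p assume "p \<in> Y"
      then have pp: "real p > 0" using primeY by (simp add: prime_gt_0_nat)
      have a: "real p ^ multiplicity p e = real p powr real (multiplicity p e)"
        using pp by (simp add: powr_realpow)
      have b: "(real p powr \<alpha>) ^ multiplicity p e = real p powr (real (multiplicity p e) * \<alpha>)"
        using pp by (simp add: powr_power)
      show "(real p powr \<alpha>) ^ multiplicity p e = (real p ^ multiplicity p e) powr \<alpha>"
        unfolding a b by (simp add: powr_powr)
    qed
    also have "\<dots> = (\<Prod>p\<in>Y. real p ^ multiplicity p e) powr \<alpha>"
      by (simp add: prod_powr_distrib)
    also have "(\<Prod>p\<in>Y. real p ^ multiplicity p e) = real e"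
    proof -
      have "real (\<Prod>p\<in>Y. p ^ multiplicity p e) = real e"
        using smooth_prod_rep[OF Eprops(1)[OF that] Eprops(3)[OF that] finY primeY] by simp
      then show ?thesis by simp
    qed
    finally show ?thesis by simp
  qed

  have "(\<Sum>e\<in>E. real e powr (\<alpha> - 1)) = (\<Sum>e\<in>E. \<Sum>u\<in>U e. H u / real e)"
  proof (rule sum.cong[OF refl])
    fix e assume e: "e \<in> E"
    have "real e > 0" using Eprops(1)[OF e] by simp
    then have "real e powr (\<alpha> - 1) = real e powr \<alpha> / real e" by (simp add: powr_diff)
    also have "\<dots> = (\<Sum>u\<in>U e. H u / real e)" using step1[OF e] by (simp add: sum_divide_distrib)
    finally show "real e powr (\<alpha> - 1) = (\<Sum>u\<in>U e. H u / real e)" .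
  qed
  also have "\<dots> = (\<Sum>(e,u)\<in>Sigma E U. H u / real e)"
    by (intro sum.Sigma finE ballI finU)
  finally have st2: "(\<Sum>e\<in>E. real e powr (\<alpha> - 1)) = (\<Sum>(e,u)\<in>Sigma E U. H u / real e)" .

  have dvd: "au u dvd e" if "e \<in> E" "u \<in> U e" for e u
  proof (rule multiplicity_le_imp_dvd)
    show "au u \<noteq> 0" using au_pos[of u] by simp
    fix q :: nat assume q: "prime q"
    show "multiplicity q (au u) \<le> multiplicity q e"
      using that q unfolding mult_au[OF q] U_def by (auto simp: PiE_iff)
  qed
  define j where "j = (\<lambda>(e::nat, u::nat\<Rightarrow>nat). (u, e div au u))"
  have inj: "inj_on j (Sigma E U)"
  proof (rule inj_onI, clarify)
    fix e u e' u' assume A: "e \<in> E" "u \<in> U e" "e' \<in> E" "u' \<in> U e'" "j (e, u) = j (e', u')"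
    then have uu: "u = u'" and dd: "e div au u = e' div au u" by (auto simp: j_def)
    have "e = au u * (e div au u)" using dvd[OF A(1,2)] by simp
    also have "\<dots> = au u * (e' div au u)" by (simp add: dd)
    also have "\<dots> = e'" using dvd[OF A(3,4)] uu by simp
    finally show "e = e' \<and> u = u'" using uu by simp
  qed
  have img1: "j (e, u) \<in> V \<times> B" if A: "e \<in> E" "u \<in> U e" for e u
  proof -
    have e1: "e \<ge> 1" "real e < x" using Eprops A by auto
    have "e div au u \<ge> 1" using dvd[OF A] e1 au_pos[of u]
      by (metis dvd_div_eq_0_iff not_one_le_zero less_one not_le neq0_conv)
    moreover have "real (e div au u) < x"
    proof -
      have "real (e div au u) \<le> real e" by simp
      then show ?thesis using e1 by linarith
    qed
    moreover have "u \<in> V"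
    proof -
      have "u p \<le> K" if "p \<in> Y" for p
      proof -
        have "u p \<le> multiplicity p e" using A(2) that unfolding U_def by (auto simp: PiE_iff)
        also have "\<dots> \<le> e" using primeY that e1 by (intro mult_le_self_nat) auto
        also have "\<dots> \<le> K" unfolding K_def using e1 by (intro nat_le_ceil) auto
        finally show ?thesis .
      qed
      then show ?thesis using A(2) unfolding U_def V_def by (auto simp: PiE_iff)
    qed
    ultimately show "j (e, u) \<in> V \<times> B" using e1 unfolding j_def B_def
      by auto
  qed
  have img: "j ` Sigma E U \<subseteq> V \<times> B"
  proof (rule image_subsetI)
    fix z assume "z \<in> Sigma E U"
    then obtain e u where "z = (e, u)" "e \<in> E" "u \<in> U e" by auto
    then show "j z \<in> V \<times> B" using img1 by simp
  qed
  define g where "g = (\<lambda>(u::nat\<Rightarrow>nat, b::nat). H u / real (au u) * (1 / real b))"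
  have Hnn: "H u \<ge> 0" for u unfolding H_def using primeY
    by (intro prod_nonneg hp_nonneg ballI) (auto intro: prime_powr_ge1 a0)
  have fg: "(case z of (e, u) \<Rightarrow> H u / real e) = g (j z)" if zS: "z \<in> Sigma E U" for z
  proof -
    obtain e u where z: "z = (e, u)" "e \<in> E" "u \<in> U e" using zS by (cases z) auto
    have "e = au u * (e div au u)" using dvd[OF z(2,3)] by simp
    then have "real e = real (au u) * real (e div au u)" by (metis of_nat_mult)
    then show ?thesis unfolding z j_def g_def by simp
  qed
  have "(\<Sum>(e,u)\<in>Sigma E U. H u / real e) = (\<Sum>z\<in>Sigma E U. g (j z))"
    using fg by (intro sum.cong refl) auto
  also have "\<dots> = (\<Sum>w\<in>j ` Sigma E U. g w)"
    using inj by (simp add: sum.reindex)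
  also have "\<dots> \<le> (\<Sum>w\<in>V \<times> B. g w)"
    using img finV finB Hnn au_pos by (intro sum_mono2) (auto simp: g_def)
  also have "\<dots> = (\<Sum>u\<in>V. H u / real (au u)) * (\<Sum>b\<in>B. 1 / real b)"
    unfolding g_def by (simp add: sum_product sum.cartesian_product)
  finally have st3: "(\<Sum>e\<in>E. real e powr (\<alpha> - 1))
      \<le> (\<Sum>u\<in>V. H u / real (au u)) * (\<Sum>b\<in>B. 1 / real b)" using st2 by simp

  have "(\<Sum>u\<in>V. H u / real (au u)) = (\<Sum>u\<in>V. \<Prod>p\<in>Y. hp (real p powr \<alpha>) (u p) / real p ^ u p)"
    unfolding H_def au_def by (simp add: prod_dividef)
  also have "\<dots> = (\<Prod>p\<in>Y. \<Sum>k\<in>{0..K}. hp (real p powr \<alpha>) k / real p ^ k)"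
    unfolding V_def using finY by (subst prod_sum_PiE) auto
  also have "\<dots> \<le> (\<Prod>p\<in>Y. exp (4 * ((real p powr \<alpha> - 1) / real p)))"
  proof (rule prod_mono)
    fix p assume p: "p \<in> Y"
    have "0 \<le> (\<Sum>k\<in>{0..K}. hp (real p powr \<alpha>) k / real p ^ k)"
      using primeY p by (intro sum_nonneg divide_nonneg_nonneg hp_nonneg)
        (auto intro: prime_powr_ge1 a0)
    moreover have "(\<Sum>k\<in>{0..K}. hp (real p powr \<alpha>) k / real p ^ k)
        \<le> 1 + 4 * ((real p powr \<alpha> - 1) / real p)"
      using primeY p a0 a1 by (intro factor_bound) auto
    moreover have "1 + 4 * ((real p powr \<alpha> - 1) / real p) \<le> exp (4 * ((real p powr \<alpha> - 1) / real p))"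
      by (rule exp_ge_add_one_self)
    ultimately show "0 \<le> (\<Sum>k\<in>{0..K}. hp (real p powr \<alpha>) k / real p ^ k) \<and>
        (\<Sum>k\<in>{0..K}. hp (real p powr \<alpha>) k / real p ^ k) \<le> exp (4 * ((real p powr \<alpha> - 1) / real p))"
      by linarith
  qed
  also have "\<dots> = exp (4 * (\<Sum>p\<in>Y. (real p powr \<alpha> - 1) / real p))"
    using finY by (simp add: exp_sum sum_distrib_left)
  finally have st4: "(\<Sum>u\<in>V. H u / real (au u)) \<le> exp (4 * (\<Sum>p\<in>Y. (real p powr \<alpha> - 1) / real p))" .
  have hb: "(\<Sum>b\<in>B. 1 / real b) \<le> 1 + ln x" unfolding B_def using x1 by (rule harm_bound)
  have "(\<Sum>u\<in>V. H u / real (au u)) * (\<Sum>b\<in>B. 1 / real b)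
      \<le> exp (4 * (\<Sum>p\<in>Y. (real p powr \<alpha> - 1) / real p)) * (1 + ln x)"
    using st4 hb Hnn au_pos
    by (intro mult_mono) (auto intro!: sum_nonneg divide_nonneg_nonneg)
  with st3 show ?thesis unfolding E_def Y_def by (simp add: mult.commute)
qed

definition part :: "nat \<Rightarrow> (nat \<Rightarrow> nat) \<Rightarrow> nat \<Rightarrow> nat" where
  "part d c i = (\<Prod>p\<in>{q\<in>prime_factors d. c q = i}. p ^ multiplicity p d)"

lemma part_mult:
  assumes "prime p" "d \<ge> 1"
  shows "multiplicity p (part d c i) = (if p \<in> prime_factors d \<and> c p = i then multiplicity p d else 0)"
  unfolding part_def using assms
  by (subst multiplicity_prod_prime_powers) (auto dest: in_prime_factors_imp_prime)

lemma part_pos: "part d c i > 0"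
  unfolding part_def by (intro prod_pos) (auto dest: in_prime_factors_imp_prime simp: prime_gt_0_nat)

lemma part_prod:
  assumes "d \<ge> 1" "c \<in> PiE (prime_factors d) (\<lambda>_. {0,1,2::nat})"
  shows "part d c 0 * part d c 1 * part d c 2 = d"
proof -
  define A where "A = (\<lambda>i. {q\<in>prime_factors d. c q = i})"
  have un: "prime_factors d = A 0 \<union> A 1 \<union> A 2" using assms(2) unfolding A_def by (auto simp: PiE_iff)
  have fin: "finite (A i)" for i unfolding A_def by auto
  have "d = (\<Prod>p\<in>prime_factors d. p ^ multiplicity p d)" using assms(1) by (subst prod_prime_factors) auto
  also have "\<dots> = (\<Prod>p\<in>A 0 \<union> A 1 \<union> A 2. p ^ multiplicity p d)" using un by simp
  also have "\<dots> = (\<Prod>p\<in>A 0 \<union> A 1. p ^ multiplicity p d) * (\<Prod>p\<in>A 2. p ^ multiplicity p d)"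
    using fin by (intro prod.union_disjoint) (auto simp: A_def)
  also have "(\<Prod>p\<in>A 0 \<union> A 1. p ^ multiplicity p d) = (\<Prod>p\<in>A 0. p ^ multiplicity p d) * (\<Prod>p\<in>A 1. p ^ multiplicity p d)"
    using fin by (intro prod.union_disjoint) (auto simp: A_def)
  finally show ?thesis unfolding part_def A_def by simp
qed

lemma triple_bound:
  fixes x y \<beta> :: real
  shows "(\<Sum>d\<in>smooth_set x y. 3 ^ omega d * real d powr \<beta>) \<le> (\<Sum>e\<in>smooth_set x y. real e powr \<beta>) ^ 3"
proof -
  define E where "E = smooth_set x y"
  define C where "C = (\<lambda>d::nat. PiE (prime_factors d) (\<lambda>_. {0,1,2::nat}))"
  define F where "F = (\<lambda>d::nat. real d powr \<beta>)"
  have finE: "finite E" unfolding E_def by (rule finite_smooth_set)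
  have finC: "finite (C d)" for d unfolding C_def by (intro finite_PiE) auto
  have cardC: "real (card (C d)) = 3 ^ omega d" for d
    unfolding C_def omega_def by (simp add: card_PiE)
  have Eprops: "d \<ge> 1" "real d < x" "\<forall>p\<in>prime_factors d. real p < y" if "d \<in> E" for d
    using that unfolding E_def smooth_set_def by auto
  define j where "j = (\<lambda>(d, c). (part d c 0, part d c 1, part d c 2))"
  have part_E: "part d c i \<in> E" if "d \<in> E" "c \<in> C d" for d c i
  proof -
    have pp: "part d c 0 * part d c 1 * part d c 2 = d"
      using part_prod[of d c] that Eprops(1)[OF that(1)] unfolding C_def by auto
    have dv: "part d c i dvd d" if "i \<in> {0,1,2}" for i
      using that pp by (auto intro: dvdI[of _ _ "part d c 1 * part d c 2"] simp: mult.assoc)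
        (metis dvd_triv_left dvd_triv_right dvd_mult2 mult.commute)+
    have "part d c i dvd d"
    proof (cases "i \<in> {0,1,2}")
      case True then show ?thesis by (rule dv)
    next
      case False
      then have "{q\<in>prime_factors d. c q = i} = {}" using that(2) unfolding C_def by (auto simp: PiE_iff)
      then show ?thesis unfolding part_def by (simp only: prod.empty one_dvd)
    qed
    moreover have d1: "d \<ge> 1" "real d < x" using Eprops that by auto
    ultimately have "part d c i \<le> d" by (intro dvd_imp_le) auto
    hence "real (part d c i) < x" using d1 by linarith
    moreover have "prime_factors (part d c i) \<subseteq> prime_factors d"
      using \<open>part d c i dvd d\<close> d1 by (intro dvd_prime_factors) auto
    ultimately show ?thesis using part_pos[of d c i] Eprops(3)[OF that(1)]
      unfolding E_def smooth_set_def by (auto simp: Suc_le_eq)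
  qed
  have inj: "inj_on j (Sigma E C)"
  proof (rule inj_onI)
    fix z z' assume z: "z \<in> Sigma E C" and z': "z' \<in> Sigma E C" and jj: "j z = j z'"
    obtain d c where zd: "z = (d, c)" "d \<in> E" "c \<in> C d" using z by (cases z) auto
    obtain d' c' where zd': "z' = (d', c')" "d' \<in> E" "c' \<in> C d'" using z' by (cases z') auto
    have eqp: "part d c i = part d' c' i" if "i \<in> {0,1,2}" for i
      using jj that unfolding zd zd' j_def by auto
    have "d = d'"
      using part_prod[of d c] part_prod[of d' c'] zd zd' Eprops eqp unfolding C_def by auto
    moreover have "c = c'"
    proof (rule PiE_ext)
      show "c \<in> PiE (prime_factors d) (\<lambda>_. {0,1,2::nat})" using zd unfolding C_def by auto
      show "c' \<in> PiE (prime_factors d) (\<lambda>_. {0,1,2::nat})" using zd' \<open>d = d'\<close> unfolding C_def by auto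
      fix p assume p: "p \<in> prime_factors d"
      have pr: "prime p" using p by (auto dest: in_prime_factors_imp_prime)
      have d1: "d \<ge> 1" using Eprops zd by auto
      have cp: "c p \<in> {0,1,2}" using zd(3) p unfolding C_def by (auto simp: PiE_iff)
      have mpos: "multiplicity p d > 0" using p d1 by (auto simp: prime_factors_multiplicity)
      have "multiplicity p (part d c (c p)) > 0" using part_mult[OF pr d1, of c "c p"] p mpos by simp
      also have "part d c (c p) = part d c' (c p)" using eqp[OF cp] \<open>d = d'\<close> by simp
      finally show "c p = c' p" using part_mult[OF pr d1, of c' "c p"] by (auto split: if_splits)
    qed
    ultimately show "z = z'" using zd zd' by simp
  qed
  have img: "j ` Sigma E C \<subseteq> E \<times> E \<times> E"
  proof (rule image_subsetI)
    fix z assume "z \<in> Sigma E C"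
    then obtain d c where "z = (d, c)" "d \<in> E" "c \<in> C d" by (cases z) auto
    then show "j z \<in> E \<times> E \<times> E" using part_E unfolding j_def by auto
  qed
  define G where "G = (\<lambda>(a, b, c). F a * F b * F c)"
  have fg: "F (fst z) = G (j z)" if zS: "z \<in> Sigma E C" for z
  proof -
    obtain d c where z: "z = (d, c)" "d \<in> E" "c \<in> C d" using zS by (cases z) auto
    have "real d = real (part d c 0) * real (part d c 1) * real (part d c 2)"
      using part_prod[of d c] z Eprops unfolding C_def by (metis of_nat_mult)
    then show ?thesis unfolding z j_def G_def F_def by (simp add: powr_mult)
  qed
  have "(\<Sum>d\<in>E. 3 ^ omega d * F d) = (\<Sum>d\<in>E. \<Sum>c\<in>C d. F d)"
    by (intro sum.cong refl) (simp add: cardC[symmetric])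
  also have "\<dots> = (\<Sum>z\<in>Sigma E C. F (fst z))"
    by (subst sum.Sigma) (auto intro: finE finC simp: case_prod_beta)
  also have "\<dots> = (\<Sum>z\<in>Sigma E C. G (j z))" using fg by (intro sum.cong refl) auto
  also have "\<dots> = (\<Sum>w\<in>j ` Sigma E C. G w)" using inj by (simp add: sum.reindex)
  also have "\<dots> \<le> (\<Sum>w\<in>E \<times> E \<times> E. G w)"
    using img finE by (intro sum_mono2) (auto simp: G_def F_def)
  also have "\<dots> = (\<Sum>a\<in>E. \<Sum>b\<in>E. \<Sum>c\<in>E. F a * F b * F c)"
    unfolding G_def by (simp add: sum.cartesian_product)
  also have "\<dots> = (\<Sum>e\<in>E. F e) ^ 3"
    by (simp add: power3_eq_cube sum_product sum_distrib_left sum_distrib_right mult_ac)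
  finally show ?thesis unfolding E_def F_def .
qed

lemma rankin:
  fixes x y \<delta> \<alpha> :: real
  assumes x1: "x \<ge> 1" and d0: "0 < \<delta>" and a0: "0 \<le> \<alpha>"
  shows "smooth_sum \<delta> x y \<le> x powr (-\<delta>*\<alpha>) * (\<Sum>e\<in>smooth_set x y. real e powr (\<alpha>-1)) ^ 3"
proof -
  define E where "E = smooth_set x y"
  define D where "D = {d. x powr \<delta> < real d \<and> real d \<le> x \<and> d \<in> smooth_set x y}"
  have DE: "D \<subseteq> E" unfolding D_def E_def by auto
  have finE: "finite E" unfolding E_def by (rule finite_smooth_set)
  have xp: "x powr (\<delta>*\<alpha>) > 0" using x1 by simp
  have tm: "3 ^ omega d / real d \<le> x powr (-\<delta>*\<alpha>) * (3 ^ omega d * real d powr (\<alpha>-1))"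
    if d: "d \<in> D" for d
  proof -
    have d1: "real d \<ge> 1" "x powr \<delta> < real d" using d unfolding D_def smooth_set_def by auto
    have "x powr (\<delta>*\<alpha>) = (x powr \<delta>) powr \<alpha>" by (simp add: powr_powr)
    also have "\<dots> \<le> real d powr \<alpha>" using d1 a0 by (intro powr_mono2) auto
    finally have le: "x powr (\<delta>*\<alpha>) \<le> real d powr \<alpha>" .
    have "1 \<le> x powr (-\<delta>*\<alpha>) * real d powr \<alpha>"
      using le xp by (simp add: powr_minus field_simps)
    hence "3 ^ omega d / real d * 1 \<le> 3 ^ omega d / real d * (x powr (-\<delta>*\<alpha>) * real d powr \<alpha>)"
      using d1 by (intro mult_left_mono) auto
    also have "\<dots> = x powr (-\<delta>*\<alpha>) * (3 ^ omega d * (real d powr \<alpha> / real d))" by simp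
    also have "real d powr \<alpha> / real d = real d powr (\<alpha> - 1)" using d1 by (simp add: powr_diff)
    finally show ?thesis by simp
  qed
  have "smooth_sum \<delta> x y = (\<Sum>d\<in>D. 3 ^ omega d / real d)" unfolding smooth_sum_def D_def by simp
  also have "\<dots> \<le> (\<Sum>d\<in>D. x powr (-\<delta>*\<alpha>) * (3 ^ omega d * real d powr (\<alpha>-1)))"
    by (intro sum_mono tm)
  also have "\<dots> = x powr (-\<delta>*\<alpha>) * (\<Sum>d\<in>D. 3 ^ omega d * real d powr (\<alpha>-1))"
    by (simp add: sum_distrib_left)
  also have "\<dots> \<le> x powr (-\<delta>*\<alpha>) * (\<Sum>d\<in>E. 3 ^ omega d * real d powr (\<alpha>-1))"
    using DE finE by (intro mult_left_mono sum_mono2) auto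
  also have "\<dots> \<le> x powr (-\<delta>*\<alpha>) * (\<Sum>e\<in>E. real e powr (\<alpha>-1)) ^ 3"
    unfolding E_def by (intro mult_left_mono triple_bound) auto
  finally show ?thesis unfolding E_def .
qed

lemma main_bound:
  fixes x y \<delta> \<alpha> :: real
  assumes x1: "x \<ge> 1" and d0: "0 < \<delta>" and a0: "0 \<le> \<alpha>" and a1: "\<alpha> \<le> 1/2"
  shows "smooth_sum \<delta> x y \<le> x powr (-\<delta>*\<alpha>) * ((1 + ln x) ^ 3 *
           exp (12 * (\<Sum>p\<in>{p. prime p \<and> real p < y}. (real p powr \<alpha> - 1) / real p)))"
proof -
  define \<Sigma> where "\<Sigma> = (\<Sum>p\<in>{p. prime p \<and> real p < y}. (real p powr \<alpha> - 1) / real p)"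
  define S where "S = (\<Sum>e\<in>smooth_set x y. real e powr (\<alpha>-1))"
  have S0: "S \<ge> 0" unfolding S_def by (intro sum_nonneg) auto
  have SB: "S \<le> (1 + ln x) * exp (4 * \<Sigma>)" unfolding S_def \<Sigma>_def by (rule S_bound[OF x1 a0 a1])
  have "S ^ 3 \<le> ((1 + ln x) * exp (4 * \<Sigma>)) ^ 3" using S0 SB by (intro power_mono) auto
  also have "\<dots> = (1 + ln x) ^ 3 * exp (12 * \<Sigma>)"
    by (simp add: power_mult_distrib exp_of_nat_mult[symmetric])
  finally have "S ^ 3 \<le> (1 + ln x) ^ 3 * exp (12 * \<Sigma>)" .
  moreover have "smooth_sum \<delta> x y \<le> x powr (-\<delta>*\<alpha>) * S ^ 3"
    unfolding S_def by (rule rankin[OF x1 d0 a0])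
  ultimately show ?thesis unfolding \<Sigma>_def
    by (meson mult_left_mono order_trans powr_ge_zero)
qed

lemma expm1_le: "0 \<le> (u::real) \<Longrightarrow> exp u - 1 \<le> u * exp u"
proof -
  assume u: "0 \<le> u"
  have "1 + (-u) \<le> exp (-u)" using exp_ge_add_one_self[of "-u"] by simp
  hence "(1 - u) * exp u \<le> exp (-u) * exp u" by (intro mult_right_mono) auto
  also have "exp (-u) * exp u = 1" by (simp add: exp_minus field_simps)
  finally show ?thesis by (simp add: algebra_simps)
qed

lemma sumY_bound:
  fixes y \<alpha> :: real
  assumes y1: "y \<ge> 1" and a0: "0 \<le> \<alpha>"
  shows "(\<Sum>p\<in>{p. prime p \<and> real p < y}. (real p powr \<alpha> - 1) / real p) \<le> 2 * \<alpha> * y powr \<alpha> * ln y"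
proof -
  define Y where "Y = {p::nat. prime p \<and> real p < y}"
  define n where "n = nat \<lfloor>y\<rfloor>"
  have n1: "n \<ge> 1" using y1 by (simp add: n_def le_nat_iff)
  have ny: "real n \<le> y" using y1 by (simp add: n_def)
  have YP: "Y \<subseteq> {p. prime p \<and> p \<le> n}"
  proof
    fix p assume "p \<in> Y"
    then have "prime p" "real p < y" by (auto simp: Y_def)
    then have "int p \<le> \<lfloor>y\<rfloor>" by linarith
    then show "p \<in> {p. prime p \<and> p \<le> n}" using \<open>prime p\<close> by (simp add: n_def le_nat_iff)
  qed
  have tb: "(real p powr \<alpha> - 1) / real p \<le> \<alpha> * y powr \<alpha> * (ln (real p) / real p)" if p: "p \<in> Y" for p
  proof -
    have pp: "real p > 0" "real p < y" "prime p" using p by (auto simp: Y_def prime_gt_0_nat)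
    have lp: "ln (real p) \<ge> 0" using pp by (simp add: prime_ge_1_nat)
    have "real p powr \<alpha> - 1 = exp (\<alpha> * ln (real p)) - 1" using pp by (simp add: powr_def)
    also have "\<dots> \<le> \<alpha> * ln (real p) * exp (\<alpha> * ln (real p))" using a0 lp by (intro expm1_le) auto
    also have "exp (\<alpha> * ln (real p)) = real p powr \<alpha>" using pp by (simp add: powr_def)
    also have "real p powr \<alpha> \<le> y powr \<alpha>" using pp a0 by (intro powr_mono2) auto
    hence "\<alpha> * ln (real p) * real p powr \<alpha> \<le> \<alpha> * ln (real p) * y powr \<alpha>"
      using a0 lp by (intro mult_left_mono) auto
    finally have "real p powr \<alpha> - 1 \<le> \<alpha> * y powr \<alpha> * ln (real p)" by (simp add: mult_ac)
    then show ?thesis using pp by (simp add: divide_right_mono)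
  qed
  have "(\<Sum>p\<in>Y. ln (real p) / real p) \<le> (\<Sum>p\<in>{p. prime p \<and> p \<le> n}. ln (real p) / real p)"
  proof (rule sum_mono2)
    show "finite {p. prime p \<and> p \<le> n}" by auto
    show "Y \<subseteq> {p. prime p \<and> p \<le> n}" by (rule YP)
    fix b assume "b \<in> {p. prime p \<and> p \<le> n} - Y"
    then have "real b \<ge> 1" by (auto simp: Suc_le_eq prime_gt_0_nat)
    then show "0 \<le> ln (real b) / real b" by simp
  qed
  also have "\<dots> \<le> 2 * ln (real n)" using n1 by (rule mertens_lite)
  also have "\<dots> \<le> 2 * ln y" using n1 ny by simp
  finally have LS: "(\<Sum>p\<in>Y. ln (real p) / real p) \<le> 2 * ln y" .
  have "(\<Sum>p\<in>Y. (real p powr \<alpha> - 1) / real p) \<le> (\<Sum>p\<in>Y. \<alpha> * y powr \<alpha> * (ln (real p) / real p))"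
    by (intro sum_mono tb)
  also have "\<dots> = \<alpha> * y powr \<alpha> * (\<Sum>p\<in>Y. ln (real p) / real p)" by (simp add: sum_distrib_left)
  also have "\<dots> \<le> \<alpha> * y powr \<alpha> * (2 * ln y)" using LS a0 by (intro mult_left_mono) auto
  finally show ?thesis unfolding Y_def by (simp add: mult_ac)
qed

lemma part1:
  fixes \<delta> \<epsilon> :: real
  assumes d0: "0 < \<delta>" and d1: "\<delta> < 1" and e0: "\<epsilon> > 0"
  shows "\<exists>C x0. \<forall>x\<ge>x0. smooth_sum \<delta> x ((ln x)^2) \<le> C * x powr (- \<delta> / 2 + \<epsilon>)"
proof -
  define e where "e = min \<epsilon> (\<delta>/2)"
  define \<theta> where "\<theta> = e / \<delta>"
  define \<alpha> where "\<alpha> = 1/2 - \<theta>/2"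
  have e_pos: "e > 0" using e0 d0 by (simp add: e_def)
  have th: "0 < \<theta>" "\<theta> \<le> 1/2" using e_pos d0 by (auto simp: \<theta>_def e_def field_simps)
  have al: "0 \<le> \<alpha>" "\<alpha> \<le> 1/2" using th by (auto simp: \<alpha>_def)
  have da: "\<delta> * \<alpha> = \<delta>/2 - e/2" using d0 by (simp add: \<alpha>_def \<theta>_def field_simps)
  have ev: "eventually (\<lambda>L. 3 * ln (1 + L) + 24 * L powr (1 - \<theta>) * ln L \<le> e / 2 * L) at_top"
    using th e_pos by real_asymp
  then obtain L0 where L0: "\<And>L. L \<ge> L0 \<Longrightarrow> 3 * ln (1 + L) + 24 * L powr (1 - \<theta>) * ln L \<le> e / 2 * L"
    by (auto simp: eventually_at_top_linorder)
  show ?thesis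
  proof (intro exI allI impI)
    fix x :: real assume x: "x \<ge> exp (max L0 1)"
    define L where "L = ln x"
    have xpos: "x > 0" using x by (meson exp_gt_zero less_le_trans)
    have LL: "L \<ge> max L0 1" unfolding L_def using x xpos by (metis exp_le_cancel_iff exp_ln)
    have L1: "L \<ge> 1" using LL by simp
    have "1 + max L0 1 \<le> exp (max L0 1)" by (rule exp_ge_add_one_self)
    moreover have "max L0 1 \<ge> 1" by simp
    ultimately have x1: "x \<ge> 1" using x by linarith
    define y where "y = L ^ 2"
    have y1: "y \<ge> 1" using L1 by (simp add: y_def one_le_power)
    define \<Sigma> where "\<Sigma> = (\<Sum>p\<in>{p. prime p \<and> real p < y}. (real p powr \<alpha> - 1) / real p)"
    have mb: "smooth_sum \<delta> x y \<le> x powr (-\<delta>*\<alpha>) * ((1 + L) ^ 3 * exp (12 * \<Sigma>))"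
      unfolding \<Sigma>_def L_def using main_bound[OF x1 d0 al] .
    have sb: "\<Sigma> \<le> 2 * \<alpha> * y powr \<alpha> * ln y" unfolding \<Sigma>_def by (rule sumY_bound[OF y1 al(1)])
    have lny: "ln y = 2 * ln L" using L1 by (simp add: y_def ln_realpow)
    have ypow: "y powr \<alpha> = L powr (1 - \<theta>)"
    proof -
      have "y powr \<alpha> = exp (\<alpha> * ln y)" using y1 by (simp add: powr_def)
      also have "\<dots> = exp ((1 - \<theta>) * ln L)" using lny by (simp add: \<alpha>_def algebra_simps)
      also have "\<dots> = L powr (1 - \<theta>)" using L1 by (simp add: powr_def)
      finally show ?thesis .
    qed
    have lnL: "ln L \<ge> 0" using L1 by simp
    have "12 * \<Sigma> \<le> 12 * (2 * \<alpha> * L powr (1 - \<theta>) * (2 * ln L))" using sb ypow lny by (simp add: mult_ac)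
    also have "\<dots> = (48 * \<alpha>) * (L powr (1 - \<theta>) * ln L)" by simp
    also have "\<dots> \<le> 24 * (L powr (1 - \<theta>) * ln L)"
      using al lnL by (intro mult_right_mono) auto
    finally have s12: "12 * \<Sigma> \<le> 24 * L powr (1 - \<theta>) * ln L" by simp
    have e3: "exp (3 * ln (1 + L)) = (1 + L) ^ 3"
    proof -
      have "ln ((1 + L) ^ 3) = 3 * ln (1 + L)" using L1 by (simp add: ln_realpow)
      moreover have "exp (ln ((1 + L) ^ 3)) = (1 + L) ^ 3" using L1 by simp
      ultimately show ?thesis by simp
    qed
    have "(1 + L) ^ 3 * exp (12 * \<Sigma>) = exp (3 * ln (1 + L) + 12 * \<Sigma>)"
      by (simp only: exp_add e3)
    also have "\<dots> \<le> exp (e / 2 * L)"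
    proof -
      have L0L: "3 * ln (1 + L) + 24 * L powr (1 - \<theta>) * ln L \<le> e / 2 * L" using L0 LL by simp
      have "3 * ln (1 + L) + 12 * \<Sigma> \<le> e / 2 * L" using s12 L0L by linarith
      then show ?thesis by simp
    qed
    also have "\<dots> = x powr (e / 2)" using xpos by (simp add: powr_def L_def mult_ac)
    finally have B: "(1 + L) ^ 3 * exp (12 * \<Sigma>) \<le> x powr (e / 2)" .
    have "smooth_sum \<delta> x ((ln x)^2) \<le> x powr (-\<delta>*\<alpha>) * x powr (e / 2)"
      using mb B unfolding y_def L_def by (meson mult_left_mono order_trans powr_ge_zero)
    also have "\<dots> = x powr (- \<delta> / 2 + e)" using da by (simp add: powr_add[symmetric])
    also have "\<dots> \<le> x powr (- \<delta> / 2 + \<epsilon>)" using x1 by (intro powr_mono) (auto simp: e_def)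
    finally show "smooth_sum \<delta> x ((ln x)^2) \<le> 1 * x powr (- \<delta> / 2 + \<epsilon>)" by simp
  qed
qed

lemma part2:
  fixes \<delta> :: real
  assumes d0: "0 < \<delta>" and d1: "\<delta> < 1"
  shows "\<exists>c>0. \<exists>C x0. \<forall>x\<ge>x0. \<forall>t::nat. 1 \<le> t \<longrightarrow> x powr (1 / real t) \<ge> (ln x)^2 \<longrightarrow>
            smooth_sum \<delta> x (x powr (1 / real t)) \<le> C * (ln x)^3 * exp (- c * real t * ln (real t))"
proof -
  define c where "c = \<delta> / 4"
  define T0 where "T0 = (48 / \<delta>) ^ 2"
  define C where "C = 8 * exp (c * T0 * ln T0)"
  have c0: "c > 0" using d0 by (simp add: c_def)
  have T0ge: "T0 \<ge> 1"
  proof -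
    have "48 / \<delta> \<ge> 1" using d0 d1 by (simp add: field_simps)
    then show ?thesis unfolding T0_def by (simp add: one_le_power)
  qed
  have lnT0: "ln T0 \<ge> 0" using T0ge by simp
  have C8: "C \<ge> 8" unfolding C_def using c0 T0ge lnT0 by simp
  have main: "smooth_sum \<delta> x (x powr (1 / real t)) \<le> C * (ln x)^3 * exp (- c * real t * ln (real t))"
    if x: "x \<ge> exp (exp 1)" and t1: "1 \<le> t" and ty: "x powr (1 / real t) \<ge> (ln x)^2"
    for x :: real and t :: nat
  proof -
    define L where "L = ln x"
    define y where "y = x powr (1 / real t)"
    have xpos: "x > 0" using x by (meson exp_gt_zero less_le_trans)
    have LL: "L \<ge> exp 1" unfolding L_def using x xpos by (metis exp_le_cancel_iff exp_ln)
    have e1: "exp (1::real) \<ge> 2" using exp_ge_add_one_self[of 1] by simp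
    have L1: "L \<ge> 1" using LL e1 by linarith
    have "ln (exp 1) \<le> ln L" using LL L1 by (subst ln_le_cancel_iff) auto
    then have lnL1: "ln L \<ge> 1" by simp
    have "1 + exp 1 \<le> exp (exp (1::real))" by (rule exp_ge_add_one_self)
    then have x1: "x \<ge> 1" using x e1 by linarith
    have tpos: "real t \<ge> 1" using t1 by simp
    have y1: "y \<ge> 1" unfolding y_def using x1 tpos by (intro ge_one_powr_ge_zero) auto
    have ypos: "y > 0" using y1 by simp
    define l where "l = L / real t"
    have lny: "ln y = l" unfolding y_def l_def L_def using xpos by (simp add: ln_powr)
    have l2: "l \<ge> 2 * ln L"
    proof -
      have "ln (L ^ 2) \<le> ln y" using ty L1 ypos unfolding y_def L_def by (subst ln_le_cancel_iff) auto
      moreover have "ln (L ^ 2) = 2 * ln L" using L1 by (simp add: ln_realpow)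
      ultimately show ?thesis using lny by simp
    qed
    have lpos: "l > 0" using l2 lnL1 by linarith
    have tL: "real t \<le> L"
    proof -
      have "L = l * real t" unfolding l_def using tpos by simp
      moreover have "l \<ge> 1" using l2 lnL1 by linarith
      moreover have "1 * real t \<le> l * real t" using \<open>l \<ge> 1\<close> tpos by (intro mult_right_mono) auto
      ultimately show ?thesis by simp
    qed
    have L3: "(1 + L) ^ 3 \<le> 8 * L ^ 3"
    proof -
      have "(1 + L) ^ 3 \<le> (2 * L) ^ 3" using L1 by (intro power_mono) auto
      then show ?thesis by (simp add: power_mult_distrib)
    qed
    have lnt0: "ln (real t) \<ge> 0" using tpos by simp
    show "smooth_sum \<delta> x (x powr (1 / real t)) \<le> C * (ln x)^3 * exp (- c * real t * ln (real t))"
    proof (cases "real t < T0")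
      case True
      define \<Sigma>0 where "\<Sigma>0 = (\<Sum>p\<in>{p. prime p \<and> real p < y}. (real p powr 0 - 1) / real p)"
      have mb: "smooth_sum \<delta> x y \<le> x powr (-\<delta>*0) * ((1 + L) ^ 3 * exp (12 * \<Sigma>0))"
        unfolding \<Sigma>0_def L_def by (rule main_bound[OF x1 d0]) auto
      have "\<Sigma>0 \<le> 2 * 0 * y powr 0 * ln y"
        unfolding \<Sigma>0_def by (rule sumY_bound[OF y1]) simp
      then have E1: "exp (12 * \<Sigma>0) \<le> 1" by simp
      have "(1 + L) ^ 3 * exp (12 * \<Sigma>0) \<le> (1 + L) ^ 3 * 1"
        using E1 L1 by (intro mult_left_mono) auto
      moreover have "x powr (-\<delta>*0) = 1" using xpos by simp
      ultimately have "smooth_sum \<delta> x y \<le> (1 + L) ^ 3" using mb by simp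
      also have "\<dots> \<le> 8 * L ^ 3" by (rule L3)
      also have "\<dots> \<le> C * L ^ 3 * exp (- c * real t * ln (real t))"
      proof -
        have "real t * ln (real t) \<le> T0 * ln T0"
        proof -
          have "real t * ln (real t) \<le> T0 * ln (real t)" using True lnt0 by (intro mult_right_mono) auto
          also have "\<dots> \<le> T0 * ln T0" using True tpos T0ge by (intro mult_left_mono) auto
          finally show ?thesis .
        qed
        then have "exp (c * T0 * ln T0) * exp (- c * real t * ln (real t)) \<ge> 1"
          using c0 by (simp add: exp_add[symmetric] mult_left_mono mult.assoc)
        then have "8 * L ^ 3 * 1 \<le> 8 * L ^ 3 * (exp (c * T0 * ln T0) * exp (- c * real t * ln (real t)))"
          using L1 by (intro mult_left_mono) auto
        then show ?thesis unfolding C_def by (simp add: mult_ac)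
      qed
      finally show ?thesis unfolding y_def L_def .
    next
      case False
      then have tT: "real t \<ge> T0" by simp
      define a where "a = ln (\<delta> * real t / 48)"
      define \<alpha> where "\<alpha> = a / l"
      have sq: "\<delta> * real t / 48 \<ge> sqrt (real t)"
      proof -
        have "sqrt (real t) \<ge> sqrt T0" using tT by simp
        moreover have "sqrt T0 = 48 / \<delta>" unfolding T0_def using d0 by simp
        ultimately have "\<delta> * sqrt (real t) / 48 \<ge> 1" using d0 by (simp add: field_simps)
        then have "sqrt (real t) * 1 \<le> sqrt (real t) * (\<delta> * sqrt (real t) / 48)"
          by (intro mult_left_mono) auto
        also have "\<dots> = \<delta> * real t / 48" using tpos by (simp add: field_simps)
        finally show ?thesis by simp
      qed
      have sqpos: "sqrt (real t) > 0" using tpos by simp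
      have a_lo: "a \<ge> ln (real t) / 2"
      proof -
        have "ln (sqrt (real t)) \<le> a" unfolding a_def using sq sqpos d0 tpos by (subst ln_le_cancel_iff) auto
        moreover have "ln (sqrt (real t)) = ln (real t) / 2" using tpos by (simp add: ln_sqrt)
        ultimately show ?thesis by simp
      qed
      have a0: "a \<ge> 0" using a_lo lnt0 by linarith
      have a_hi: "a \<le> ln (real t)"
        unfolding a_def using d0 d1 tpos sq sqpos by (subst ln_le_cancel_iff) (auto simp: field_simps)
      have al0: "\<alpha> \<ge> 0" unfolding \<alpha>_def using a0 lpos by simp
      have al1: "\<alpha> \<le> 1/2"
      proof -
        have "ln (real t) \<le> ln L" using tL tpos by simp
        then have "a \<le> l / 2" using a_hi l2 by linarith
        then show ?thesis unfolding \<alpha>_def using lpos by (simp add: field_simps)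
      qed
      define \<Sigma> where "\<Sigma> = (\<Sum>p\<in>{p. prime p \<and> real p < y}. (real p powr \<alpha> - 1) / real p)"
      have mb: "smooth_sum \<delta> x y \<le> x powr (-\<delta>*\<alpha>) * ((1 + L) ^ 3 * exp (12 * \<Sigma>))"
        unfolding \<Sigma>_def L_def by (rule main_bound[OF x1 d0 al0 al1])
      have sb: "\<Sigma> \<le> 2 * \<alpha> * y powr \<alpha> * ln y" unfolding \<Sigma>_def by (rule sumY_bound[OF y1 al0])
      have ya: "y powr \<alpha> = \<delta> * real t / 48"
      proof -
        have "y powr \<alpha> = exp (\<alpha> * ln y)" using ypos by (simp add: powr_def)
        also have "\<alpha> * ln y = a" unfolding \<alpha>_def lny using lpos by simp
        also have "exp a = \<delta> * real t / 48" unfolding a_def using d0 tpos by simp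
        finally show ?thesis .
      qed
      have s12: "12 * \<Sigma> \<le> \<delta> * a * real t / 2"
      proof -
        have "12 * \<Sigma> \<le> 24 * (\<alpha> * ln y) * (y powr \<alpha>)" using sb by (simp add: mult_ac)
        also have "\<alpha> * ln y = a" unfolding \<alpha>_def lny using lpos by simp
        finally show ?thesis unfolding ya by (simp add: field_simps)
      qed
      have xa: "x powr (-\<delta>*\<alpha>) = exp (- \<delta> * a * real t)"
      proof -
        have "x powr (-\<delta>*\<alpha>) = exp (-\<delta>*\<alpha> * L)" using xpos by (simp add: powr_def L_def)
        also have "\<alpha> * L = a * real t" unfolding \<alpha>_def l_def using tpos L1 by (simp add: field_simps)
        hence "-\<delta>*\<alpha> * L = - \<delta> * a * real t" by (simp add: mult.assoc)
        finally show ?thesis .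
      qed
      have "(1 + L) ^ 3 * exp (12 * \<Sigma>) \<le> (1 + L) ^ 3 * exp (\<delta> * a * real t / 2)"
        using s12 L1 by (intro mult_left_mono) auto
      then have "x powr (-\<delta>*\<alpha>) * ((1 + L) ^ 3 * exp (12 * \<Sigma>))
          \<le> x powr (-\<delta>*\<alpha>) * ((1 + L) ^ 3 * exp (\<delta> * a * real t / 2))"
        by (rule mult_left_mono) auto
      then have "smooth_sum \<delta> x y \<le> exp (- \<delta> * a * real t) * ((1 + L) ^ 3 * exp (\<delta> * a * real t / 2))"
        using mb unfolding xa by linarith
      also have "\<dots> = (1 + L) ^ 3 * exp (- (\<delta> * a * real t / 2))"
        by (simp add: mult_ac exp_add[symmetric])
      also have "\<dots> \<le> 8 * L ^ 3 * exp (- c * real t * ln (real t))"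
      proof (rule mult_mono)
        show "(1 + L) ^ 3 \<le> 8 * L ^ 3" by (rule L3)
        have "c * real t * ln (real t) \<le> \<delta> * a * real t / 2"
        proof -
          have "c * real t * ln (real t) = (\<delta> * real t / 2) * (ln (real t) / 2)" by (simp add: c_def)
          also have "\<dots> \<le> (\<delta> * real t / 2) * a" using a_lo d0 tpos by (intro mult_left_mono) auto
          finally show ?thesis by (simp add: mult_ac)
        qed
        then show "exp (- (\<delta> * a * real t / 2)) \<le> exp (- c * real t * ln (real t))" by simp
      qed (use L1 in auto)
      also have "\<dots> \<le> C * L ^ 3 * exp (- c * real t * ln (real t))"
        using C8 L1 by (intro mult_right_mono) auto
      finally show ?thesis unfolding y_def L_def .
    qed
  qed
  show ?thesis using c0 main by blast
qed

theorem lemma2p9: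
  fixes \<delta> :: real
  assumes "0 < \<delta>" and "\<delta> < 1"
  shows "(\<forall>\<epsilon>>0. \<exists>C x0. \<forall>x\<ge>x0.
            smooth_sum \<delta> x ((ln x)^2) \<le> C * x powr (- \<delta> / 2 + \<epsilon>))
       \<and> (\<exists>c>0. \<exists>C x0. \<forall>x\<ge>x0. \<forall>t::nat. 1 \<le> t \<longrightarrow> x powr (1 / real t) \<ge> (ln x)^2 \<longrightarrow>
            smooth_sum \<delta> x (x powr (1 / real t)) \<le> C * (ln x)^3 * exp (- c * real t * ln (real t)))"
  using part1[OF assms] part2[OF assms] by blast

end
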